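(* Let $C\subseteq\mathbb{R}^m$ be closed convex and $\ell$ a loss with (sub)gradient $g$ such that $\ell$ is $(h,\phi)$-restorative and $(\ell,C)$ satisfies inward flow. Let $B\ge0$. Then for every $\tilde\theta\in\mathbb{R}^m$ with $\|\Pi_C(\tilde\theta)-\tilde\theta\|_2\le B$ and $\|\tilde\theta\|_2>h+B$, $$\big\langle\tilde\theta,g(\Pi_C(\tilde\theta))\big\rangle\ge\phi(\Pi_C(\tilde\theta)).$$
   Context: $\Pi_C$ is Euclidean projection onto $C$. $\ell$ is $(h,\phi)$-restorative ($h\ge0$, $\phi$ nonnegative) if all subgradients $g$ satisfy $\langle\theta,g(\theta)\rangle\ge\phi(\theta)$ whenever $\|\theta\|_2>h$. $(\ell,C)$ satisfies inward flow if $-g(\theta)\in T_C(\theta)$ for all $\theta$ on the boundary of $C$, where $T_C(x)=\mathrm{cl}\{y:\exists\beta>0,\ x+\varepsilon y\in C\ \forall\varepsilon\in[0,\beta]\}$. *)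

theory Defs
  imports "HOL-Analysis.Analysis"
begin

definition tangent_cone :: "('a::real_normed_vector) set \<Rightarrow> 'a \<Rightarrow> 'a set" where
  "tangent_cone C x = closure {y. \<exists>\<beta>>0. \<forall>\<epsilon>\<in>{0..\<beta>}. x + \<epsilon> *\<^sub>R y \<in> C}"

definition restorative :: "('a::real_inner \<Rightarrow> 'a) \<Rightarrow> real \<Rightarrow> ('a \<Rightarrow> real) \<Rightarrow> bool" where
  "restorative g h \<phi> \<longleftrightarrow> h \<ge> 0 \<and> (\<forall>\<theta>. \<phi> \<theta> \<ge> 0) \<and>
     (\<forall>\<theta>. norm \<theta> > h \<longrightarrow> inner \<theta> (g \<theta>) \<ge> \<phi> \<theta>)"

definition inward_flow :: "('a::real_normed_vector \<Rightarrow> 'a) \<Rightarrow> 'a set \<Rightarrow> bool" where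
  "inward_flow g C \<longleftrightarrow> (\<forall>\<theta>\<in>frontier C. - g \<theta> \<in> tangent_cone C \<theta>)"

end

theory Submission
  imports Defs
begin

theorem lemma7:
  fixes C :: "(real ^ 'm) set" and g :: "real ^ 'm \<Rightarrow> real ^ 'm"
    and \<phi> :: "real ^ 'm \<Rightarrow> real" and h B :: real and \<theta>t :: "real ^ 'm"
  assumes "closed C" and "convex C" and "C \<noteq> {}"
    and "restorative g h \<phi>"
    and "inward_flow g C"
    and "B \<ge> 0"
    and "norm (closest_point C \<theta>t - \<theta>t) \<le> B"
    and "norm \<theta>t > h + B"
  shows "inner \<theta>t (g (closest_point C \<theta>t)) \<ge> \<phi> (closest_point C \<theta>t)"
proof -
  define p where "p = closest_point C \<theta>t"
  define d where "d = \<theta>t - p"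
  have pC: "p \<in> C" using assms(1,3) closest_point_in_set p_def by blast
  have np: "norm p > h"
  proof -
    have "norm \<theta>t \<le> norm p + norm (p - \<theta>t)" using norm_triangle_ineq[of p "\<theta>t - p"] by (simp add: norm_minus_commute)
    then show ?thesis using assms(7,8) unfolding p_def[symmetric] by linarith
  qed
  have r: "inner p (g p) \<ge> \<phi> p" using assms(4) np unfolding restorative_def by blast
  have dot: "\<And>x. x \<in> C \<Longrightarrow> inner d (x - p) \<le> 0"
    using closest_point_dot[OF assms(2,1)] p_def d_def by blast
  have key: "inner d (g p) \<ge> 0"
  proof (cases "d = 0")
    case True then show ?thesis by simp
  next
    case False
    have pf: "p \<in> frontier C"
    proof -
      have "p \<notin> interior C"
      proof
        assume "p \<in> interior C"
        then obtain e where e: "e > 0" "ball p e \<subseteq> C"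
          using mem_interior by blast
        define t where "t = e / (2 * norm d)"
        have nd: "norm d > 0" using False by simp
        have t: "t > 0" using e nd t_def by simp
        have "norm (t *\<^sub>R d) = e/2" using nd e t_def by simp
        then have "p + t *\<^sub>R d \<in> ball p e" using e by (simp add: dist_norm)
        then have "p + t *\<^sub>R d \<in> C" using e by blast
        then have "inner d ((p + t *\<^sub>R d) - p) \<le> 0" by (rule dot)
        then have "inner d (t *\<^sub>R d) \<le> 0" by simp
        moreover have "inner d (t *\<^sub>R d) > 0" using t False by simp
        ultimately show False by simp
      qed
      then show ?thesis using pC assms(1) by (simp add: frontier_def closure_closed)
    qed
    then have "- g p \<in> tangent_cone C p" using assms(5) unfolding inward_flow_def by blast
    moreover have "tangent_cone C p \<subseteq> {y. inner d y \<le> 0}"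
      unfolding tangent_cone_def
    proof (rule closure_minimal)
      show "closed {y. inner d y \<le> 0}" using closed_halfspace_le by blast
      show "{y. \<exists>\<beta>>0. \<forall>\<epsilon>\<in>{0..\<beta>}. p + \<epsilon> *\<^sub>R y \<in> C} \<subseteq> {y. inner d y \<le> 0}"
      proof
        fix y assume "y \<in> {y. \<exists>\<beta>>0. \<forall>\<epsilon>\<in>{0..\<beta>}. p + \<epsilon> *\<^sub>R y \<in> C}"
        then obtain \<beta> where b: "\<beta> > 0" "p + \<beta> *\<^sub>R y \<in> C" by auto
        then have "inner d ((p + \<beta> *\<^sub>R y) - p) \<le> 0" using dot by blast
        then have "inner d (\<beta> *\<^sub>R y) \<le> 0" by simp
        then have "\<beta> * inner d y \<le> 0" by simp
        then show "y \<in> {y. inner d y \<le> 0}" using b(1)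
          by (simp add: mult_le_0_iff)
      qed
    qed
    ultimately show ?thesis by auto
  qed
  have "inner \<theta>t (g p) = inner p (g p) + inner d (g p)"
    by (simp add: d_def inner_diff_left)
  then show ?thesis using r key unfolding p_def[symmetric] by linarith
qed

end
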